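(* Let $G$ be a connected graph with girth $g(G)=4$ and let $(x,y)\in E(G)$ with $d_x=d_y=d$. Then $\kappa(x,y)=0$ if and only if there is a perfect matching between $N_G(x)$ and $N_G(y)$, i.e. a bijection $\sigma:N_G(x)\to N_G(y)$ with $(a,\sigma(a))\in E(G)$ for all $a\in N_G(x)$.
   Context: Graphs are locally finite and unweighted; the girth is the length of a shortest cycle. $d_G$ is the shortest-path metric, $N_G(v)$ the neighbour set and $d_v$ the degree of $v$; $m_v$ is the uniform probability measure on $N_G(v)$, and for an edge $(x,y)$, $\kappa(x,y)=1-W_1(m_x,m_y)$, where $W_1$ is the Wasserstein-1 (transportation) distance with respect to $d_G$. *)

theory Defs
  imports Complex_Main "HOL-Library.Extended_Nat"
begin

definition simple_graph :: "('a \<Rightarrow> 'a \<Rightarrow> bool) \<Rightarrow> bool" where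
  "simple_graph E \<longleftrightarrow> (\<forall>x y. E x y \<longrightarrow> E y x) \<and> (\<forall>x. \<not> E x x)"

definition nbhd :: "('a \<Rightarrow> 'a \<Rightarrow> bool) \<Rightarrow> 'a \<Rightarrow> 'a set" where
  "nbhd E x = {y. E x y}"

definition degree :: "('a \<Rightarrow> 'a \<Rightarrow> bool) \<Rightarrow> 'a \<Rightarrow> nat" where
  "degree E x = card (nbhd E x)"

definition locally_finite :: "('a \<Rightarrow> 'a \<Rightarrow> bool) \<Rightarrow> bool" where
  "locally_finite E \<longleftrightarrow> (\<forall>x. finite (nbhd E x))"

definition walk :: "('a \<Rightarrow> 'a \<Rightarrow> bool) \<Rightarrow> 'a list \<Rightarrow> bool" where
  "walk E p \<longleftrightarrow> p \<noteq> [] \<and> (\<forall>i. Suc i < length p \<longrightarrow> E (p ! i) (p ! Suc i))"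

definition connected_graph :: "('a \<Rightarrow> 'a \<Rightarrow> bool) \<Rightarrow> bool" where
  "connected_graph E \<longleftrightarrow> (\<forall>x y. \<exists>p. walk E p \<and> hd p = x \<and> last p = y)"

text \<open>Shortest-path distance (number of edges); meaningful for connected graphs.\<close>
definition gdist :: "('a \<Rightarrow> 'a \<Rightarrow> bool) \<Rightarrow> 'a \<Rightarrow> 'a \<Rightarrow> nat" where
  "gdist E x y = (LEAST n. \<exists>p. walk E p \<and> hd p = x \<and> last p = y \<and> length p = Suc n)"

definition cycle :: "('a \<Rightarrow> 'a \<Rightarrow> bool) \<Rightarrow> 'a list \<Rightarrow> bool" where
  "cycle E c \<longleftrightarrow> length c \<ge> 3 \<and> distinct c \<and> walk E c \<and> E (last c) (hd c)"

text \<open>Girth = length of a shortest cycle (infinity if acyclic).\<close>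
definition girth :: "('a \<Rightarrow> 'a \<Rightarrow> bool) \<Rightarrow> enat" where
  "girth E = Inf {enat (length c) | c. cycle E c}"

text \<open>Wasserstein-1 distance between finitely supported probability measures
  \<mu> (supported in S) and \<nu> (supported in T), w.r.t. the cost d: infimum over
  transport plans (couplings) of the transport cost.\<close>
definition coupling :: "'a set \<Rightarrow> ('a \<Rightarrow> real) \<Rightarrow> 'a set \<Rightarrow> ('a \<Rightarrow> real) \<Rightarrow> ('a \<Rightarrow> 'a \<Rightarrow> real) \<Rightarrow> bool" where
  "coupling S \<mu> T \<nu> \<pi> \<longleftrightarrow>
     (\<forall>u v. \<pi> u v \<ge> 0) \<and> (\<forall>u v. (u \<notin> S \<or> v \<notin> T) \<longrightarrow> \<pi> u v = 0) \<and>
     (\<forall>u\<in>S. (\<Sum>v\<in>T. \<pi> u v) = \<mu> u) \<and> (\<forall>v\<in>T. (\<Sum>u\<in>S. \<pi> u v) = \<nu> v)"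

definition wasserstein1 :: "('a \<Rightarrow> 'a \<Rightarrow> real) \<Rightarrow> 'a set \<Rightarrow> ('a \<Rightarrow> real) \<Rightarrow> 'a set \<Rightarrow> ('a \<Rightarrow> real) \<Rightarrow> real" where
  "wasserstein1 d S \<mu> T \<nu> =
     Inf {(\<Sum>u\<in>S. \<Sum>v\<in>T. \<pi> u v * d u v) | \<pi>. coupling S \<mu> T \<nu> \<pi>}"

definition unif_nbhd :: "('a \<Rightarrow> 'a \<Rightarrow> bool) \<Rightarrow> 'a \<Rightarrow> 'a \<Rightarrow> real" where
  "unif_nbhd E x u = (if u \<in> nbhd E x then 1 / real (degree E x) else 0)"

definition ollivier_curv :: "('a \<Rightarrow> 'a \<Rightarrow> bool) \<Rightarrow> 'a \<Rightarrow> 'a \<Rightarrow> real" where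
  "ollivier_curv E x y = 1 - wasserstein1 (\<lambda>u v. real (gdist E u v))
      (nbhd E x) (unif_nbhd E x) (nbhd E y) (unif_nbhd E y)"

end

theory Submission
  imports Defs
begin

lemma hall_aux:
  fixes N :: "'a \<Rightarrow> 'b set"
  assumes "card A = n" "finite A" "\<forall>a\<in>A. finite (N a)" "\<forall>S\<subseteq>A. card S \<le> card (\<Union>(N ` S))"
  shows "\<exists>f. inj_on f A \<and> (\<forall>a\<in>A. f a \<in> N a)"
  using assms
proof (induct n arbitrary: A N rule: less_induct)
  case (less n A N)
  show ?case
  proof (cases "A = {}")
    case True then show ?thesis by auto
  next
    case False
    show ?thesis
    proof (cases "\<exists>S. S \<subseteq> A \<and> S \<noteq> {} \<and> S \<noteq> A \<and> card (\<Union>(N ` S)) \<le> card S")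
      case True
      then obtain S where S: "S \<subseteq> A" "S \<noteq> {}" "S \<noteq> A" "card (\<Union>(N ` S)) \<le> card S" by blast
      have fS: "finite S" using S(1) less.prems(2) finite_subset by blast
      have cS: "card S < n" using S less.prems(1,2) by (metis psubsetI psubset_card_mono)
      have eq: "card (\<Union>(N ` S)) = card S" using S(4) less.prems(4) S(1) by (meson le_antisym)
      have h1: "\<forall>a\<in>S. finite (N a)" using less.prems(3) S(1) by (meson subsetD)
      have h2: "\<forall>T\<subseteq>S. card T \<le> card (\<Union>(N ` T))"
      proof (intro allI impI)
        fix T assume "T \<subseteq> S" then have "T \<subseteq> A" using S(1) by (rule order_trans)
        then show "card T \<le> card (\<Union>(N ` T))" using less.prems(4) by simp
      qed
      obtain f1 where f1: "inj_on f1 S" "\<forall>a\<in>S. f1 a \<in> N a"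
        using less.hyps[OF cS refl fS h1 h2] by blast
      define N2 where "N2 = (\<lambda>c. N c - \<Union>(N ` S))"
      have cA: "card (A - S) < n" using S less.prems(1,2) fS cS
        by (simp add: card_Diff_subset card_gt_0_iff)
      have hall2: "\<forall>T\<subseteq>A - S. card T \<le> card (\<Union>(N2 ` T))"
      proof (intro allI impI)
        fix T assume T: "T \<subseteq> A - S"
        have fT: "finite T" using T less.prems(2) finite_subset by blast
        have fin: "finite (\<Union>(N ` (T \<union> S)))" using T S(1) fT fS less.prems(3) by auto
        have "card T + card S = card (T \<union> S)" using T fT fS by (simp add: card_Un_disjoint disjoint_iff subset_iff)
        also have "\<dots> \<le> card (\<Union>(N ` (T \<union> S)))"
        proof -
          have "T \<union> S \<subseteq> A" using T S(1) by blast
          then show ?thesis using less.prems(4) by blast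
        qed
        also have "\<Union>(N ` (T \<union> S)) = \<Union>(N2 ` T) \<union> \<Union>(N ` S)" unfolding N2_def by auto
        also have "card \<dots> \<le> card (\<Union>(N2 ` T)) + card (\<Union>(N ` S))" by (rule card_Un_le)
        finally show "card T \<le> card (\<Union>(N2 ` T))" using eq by simp
      qed
      obtain f2 where f2: "inj_on f2 (A - S)" "\<forall>a\<in>A - S. f2 a \<in> N2 a"
        using less.hyps[OF cA refl _ _ hall2] less.prems(2,3) unfolding N2_def by auto
      define f where "f = (\<lambda>c. if c \<in> S then f1 c else f2 c)"
      have "inj_on f A"
        unfolding inj_on_def f_def
      proof (intro ballI impI)
        fix a b assume ab: "a \<in> A" "b \<in> A" "(if a \<in> S then f1 a else f2 a) = (if b \<in> S then f1 b else f2 b)"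
        show "a = b"
        proof (cases "a \<in> S"; cases "b \<in> S")
          assume "a \<in> S" "b \<in> S" then show ?thesis using ab f1(1) by (auto simp: inj_on_def)
        next
          assume "a \<notin> S" "b \<notin> S" then show ?thesis using ab f2(1) by (auto simp: inj_on_def)
        next
          assume as: "a \<in> S" "b \<notin> S"
          have "f1 a \<in> \<Union>(N ` S)" using f1(2) as(1) by blast
          moreover have "f2 b \<notin> \<Union>(N ` S)" using f2(2) ab(2) as(2) unfolding N2_def by blast
          ultimately show ?thesis using ab(3) as by simp
        next
          assume as: "a \<notin> S" "b \<in> S"
          have "f1 b \<in> \<Union>(N ` S)" using f1(2) as(2) by blast
          moreover have "f2 a \<notin> \<Union>(N ` S)" using f2(2) ab(1) as(1) unfolding N2_def by blast
          ultimately show ?thesis using ab(3) as by simp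
        qed
      qed
      moreover have "\<forall>a\<in>A. f a \<in> N a" using f1(2) f2(2) unfolding f_def N2_def by auto
      ultimately show ?thesis by blast
    next
      case False2: False
      obtain a where a: "a \<in> A" using False by blast
      have "{a} \<subseteq> A" using a by simp
      then have "card {a} \<le> card (\<Union>(N ` {a}))" using less.prems(4) by blast
      then have "card {a} \<le> card (N a)" by simp
      then have "N a \<noteq> {}" by auto
      then obtain b where b: "b \<in> N a" by blast
      define N2 where "N2 = (\<lambda>c. N c - {b})"
      have "card A > 0" using a less.prems(2) card_gt_0_iff by blast
      then have cA: "card (A - {a}) < n" using a less.prems(1,2) by simp
      have hall2: "\<forall>T\<subseteq>A - {a}. card T \<le> card (\<Union>(N2 ` T))"
      proof (intro allI impI)
        fix T assume T: "T \<subseteq> A - {a}"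
        show "card T \<le> card (\<Union>(N2 ` T))"
        proof (cases "T = {}")
          case True then show ?thesis by simp
        next
          case False
          have fT: "finite T" using T less.prems(2) finite_subset by blast
          have fin: "finite (\<Union>(N ` T))" using T fT less.prems(3) by auto
          have "T \<subseteq> A" "T \<noteq> A" using T a by auto
          then have lt: "card T < card (\<Union>(N ` T))" using False2 False by (meson not_le)
          have "\<Union>(N2 ` T) = \<Union>(N ` T) - {b}" unfolding N2_def by auto
          then have "card (\<Union>(N2 ` T)) \<ge> card (\<Union>(N ` T)) - 1" using fin
            by (metis card_Diff_singleton card_Diff_singleton_if diff_le_self le_refl)
          then show ?thesis using lt by linarith
        qed
      qed
      obtain f2 where f2: "inj_on f2 (A - {a})" "\<forall>c\<in>A - {a}. f2 c \<in> N2 c"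
        using less.hyps[OF cA refl _ _ hall2] less.prems(2,3) unfolding N2_def by auto
      define f where "f = f2(a := b)"
      have "inj_on f A" unfolding f_def using f2 unfolding N2_def
        by (smt (verit, ccfv_threshold) DiffD2 Diff_empty Diff_insert0 a fun_upd_apply inj_on_def insert_Diff insert_iff)
      moreover have "\<forall>c\<in>A. f c \<in> N c" using f2(2) b unfolding f_def N2_def by auto
      ultimately show ?thesis by blast
    qed
  qed
qed


lemma gdist_le1: "E u v \<Longrightarrow> gdist E u v \<le> 1"
  unfolding gdist_def
proof (rule Least_le)
  assume "E u v"
  then show "\<exists>p. walk E p \<and> hd p = u \<and> last p = v \<and> length p = Suc 1"
    by (intro exI[of _ "[u,v]"]) (auto simp: walk_def less_Suc_eq)
qed

lemma gdist_small:
  assumes "connected_graph E" "gdist E u v \<le> 1"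
  shows "u = v \<or> E u v"
proof -
  obtain p where p: "walk E p" "hd p = u" "last p = v" using assms(1) unfolding connected_graph_def by blast
  then have "\<exists>n p. walk E p \<and> hd p = u \<and> last p = v \<and> length p = Suc n"
    by (intro exI[of _ "length p - 1"] exI[of _ p]) (auto simp: walk_def)
  then have "\<exists>q. walk E q \<and> hd q = u \<and> last q = v \<and> length q = Suc (gdist E u v)"
    unfolding gdist_def by (rule LeastI_ex)
  then obtain q where q: "walk E q" "hd q = u" "last q = v" "length q = Suc (gdist E u v)"
    by blast
  show ?thesis
  proof (cases "gdist E u v = 0")
    case True
    then obtain a where "q = [a]" using q(4) by (cases q) auto
    then show ?thesis using q by simp
  next
    case False
    then have "length q = 2" using q(4) assms(2) by simp
    then obtain a b where qq: "q = [a,b]" by (cases q; cases "tl q") auto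
    have "E (q!0) (q!Suc 0)" using q(1) qq unfolding walk_def by auto
    then show ?thesis using q qq by simp
  qed
qed

lemma gdist_zero:
  assumes "connected_graph E" "gdist E u v = 0"
  shows "u = v"
proof -
  obtain p where p: "walk E p" "hd p = u" "last p = v" using assms(1) unfolding connected_graph_def by blast
  then have "\<exists>n p. walk E p \<and> hd p = u \<and> last p = v \<and> length p = Suc n"
    by (intro exI[of _ "length p - 1"] exI[of _ p]) (auto simp: walk_def)
  then have "\<exists>q. walk E q \<and> hd q = u \<and> last q = v \<and> length q = Suc (gdist E u v)"
    unfolding gdist_def by (rule LeastI_ex)
  then obtain q where q: "walk E q" "hd q = u" "last q = v" "length q = Suc (gdist E u v)"
    by blast
  then obtain a where "q = [a]" using assms(2) by (cases q) auto
  then show ?thesis using q by simp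
qed


lemma coupling_total:
  assumes "coupling X mu Y nu p" "finite X" "\<forall>u\<in>X. mu u = 1 / real d" "card X = d" "d > 0"
  shows "(\<Sum>u\<in>X. \<Sum>v\<in>Y. p u v) = 1"
proof -
  have "(\<Sum>u\<in>X. \<Sum>v\<in>Y. p u v) = (\<Sum>u\<in>X. 1 / real d)"
    using assms(1,3) unfolding coupling_def by (intro sum.cong) auto
  also have "\<dots> = 1" using assms(4,5) by simp
  finally show ?thesis .
qed

lemma cyc3: assumes "E x y" "E y u" "E x u" "\<And>a b. E a b \<Longrightarrow> E b a" "\<And>a. \<not> E a a"
  shows "cycle E [x, y, u]"
proof -
  have d: "x \<noteq> y" "x \<noteq> u" "y \<noteq> u" using assms by metis+
  have w: "walk E [x,y,u]" unfolding walk_def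
  proof (intro conjI allI impI)
    fix i assume "Suc i < length [x,y,u]"
    then have "i = 0 \<or> i = 1" by auto
    then show "E ([x,y,u] ! i) ([x,y,u] ! Suc i)" using assms by auto
  qed simp
  show ?thesis unfolding cycle_def using d w assms by simp
qed

theorem corollary4p3:
  fixes E :: "'a \<Rightarrow> 'a \<Rightarrow> bool" and x y :: 'a and d :: nat
  assumes "simple_graph E" and "locally_finite E" and "connected_graph E"
    and "girth E = 4"
    and "E x y" and "degree E x = d" and "degree E y = d"
  shows "ollivier_curv E x y = 0 \<longleftrightarrow>
    (\<exists>\<sigma>. bij_betw \<sigma> (nbhd E x) (nbhd E y) \<and> (\<forall>a\<in>nbhd E x. E a (\<sigma> a)))"
proof -
  define X where "X = nbhd E x"
  define Y where "Y = nbhd E y"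
  define g where "g = (\<lambda>u v. real (gdist E u v))"
  define mu where "mu = unif_nbhd E x"
  define nu where "nu = unif_nbhd E y"
  have sym: "\<And>a b. E a b \<Longrightarrow> E b a" and irr: "\<And>a. \<not> E a a"
    using assms(1) unfolding simple_graph_def by auto
  have fX: "finite X" and fY: "finite Y" using assms(2) unfolding X_def Y_def locally_finite_def by auto
  have cX: "card X = d" and cY: "card Y = d" using assms(6,7) unfolding X_def Y_def degree_def by auto
  have yX: "y \<in> X" using assms(5) unfolding X_def nbhd_def by simp
  have dpos: "d > 0" using cX fX yX card_gt_0_iff by blast
  have mu: "\<forall>u\<in>X. mu u = 1 / real d" unfolding mu_def unif_nbhd_def X_def using assms(6) by simp
  have nu: "\<forall>u\<in>Y. nu u = 1 / real d" unfolding nu_def unif_nbhd_def Y_def using assms(7) by simp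
  have disj: "u \<noteq> v" if "u \<in> X" "v \<in> Y" for u v
  proof
    assume "u = v"
    then have eu: "E x u" "E y u" using that unfolding X_def Y_def nbhd_def by auto
    have "cycle E [x, y, u]" by (rule cyc3[OF assms(5) eu(2) eu(1) sym irr])
    then have "girth E \<le> enat 3" unfolding girth_def by (intro Inf_lower) (auto intro!: exI[of _ "[x,y,u]"])
    then show False using assms(4) by (simp add: numeral_eq_enat)
  qed
  have g1: "g u v \<ge> 1" if "u \<in> X" "v \<in> Y" for u v
  proof (rule ccontr)
    assume "\<not> g u v \<ge> 1"
    then have "real (gdist E u v) < 1" unfolding g_def by linarith
    then have "gdist E u v = 0" by linarith
    then have "u = v" by (rule gdist_zero[OF assms(3)])
    then show False using disj that by blast
  qed
  have g2: "g u v \<ge> 2" if "u \<in> X" "v \<in> Y" "\<not> E u v" for u v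
  proof (rule ccontr)
    assume "\<not> g u v \<ge> 2"
    then have "real (gdist E u v) < 2" unfolding g_def by linarith
    then have "gdist E u v \<le> 1" by linarith
    then have "u = v \<or> E u v" by (rule gdist_small[OF assms(3)])
    then show False using disj that by blast
  qed
  have ge: "g u v = 1" if "u \<in> X" "v \<in> Y" "E u v" for u v
    using g1[OF that(1,2)] gdist_le1[of E u v, OF that(3)] unfolding g_def by linarith
  define C where "C = {(\<Sum>u\<in>X. \<Sum>v\<in>Y. p u v * g u v) | p. coupling X mu Y nu p}"
  have W: "wasserstein1 g X mu Y nu = Inf C" unfolding wasserstein1_def C_def by simp
  have kappa: "ollivier_curv E x y = 1 - Inf C"
    unfolding ollivier_curv_def W[symmetric] g_def X_def Y_def mu_def nu_def by simp
  have tot: "(\<Sum>u\<in>X. \<Sum>v\<in>Y. p u v) = 1" if "coupling X mu Y nu p" for p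
    using coupling_total[OF that fX mu cX dpos] .
  have Cge1: "c \<ge> 1" if cC: "c \<in> C" for c
  proof -
    obtain p where p: "coupling X mu Y nu p" "c = (\<Sum>u\<in>X. \<Sum>v\<in>Y. p u v * g u v)"
      using cC unfolding C_def by blast
    have "(\<Sum>u\<in>X. \<Sum>v\<in>Y. p u v * 1) \<le> c" unfolding p(2)
      using p(1) g1 unfolding coupling_def by (intro sum_mono mult_left_mono; use p(1) g1 in \<open>auto simp: coupling_def\<close>)
    then show ?thesis using tot[OF p(1)] by simp
  qed
  have bdd: "bdd_below C" using Cge1 by (rule bdd_belowI)
  define p0 where "p0 = (\<lambda>u v. if u \<in> X \<and> v \<in> Y then 1 / real d * (1 / real d) else 0)"
  have "coupling X mu Y nu p0"
    unfolding coupling_def p0_def using mu nu cX cY dpos by (auto simp: power2_eq_square)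
  then have Cne: "C \<noteq> {}" unfolding C_def by blast
  have Wge: "Inf C \<ge> 1" using Cne Cge1 by (rule cInf_greatest)
  show ?thesis
  proof
    assume k0: "ollivier_curv E x y = 0"
    show "\<exists>\<sigma>. bij_betw \<sigma> (nbhd E x) (nbhd E y) \<and> (\<forall>a\<in>nbhd E x. E a (\<sigma> a))"
    proof (rule ccontr)
      assume nm: "\<not> (\<exists>\<sigma>. bij_betw \<sigma> (nbhd E x) (nbhd E y) \<and> (\<forall>a\<in>nbhd E x. E a (\<sigma> a)))"
      define N where "N = (\<lambda>a. {v\<in>Y. E a v})"
      have "\<not> (\<forall>S\<subseteq>X. card S \<le> card (\<Union>(N ` S)))"
      proof
        assume h: "\<forall>S\<subseteq>X. card S \<le> card (\<Union>(N ` S))"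
        have fN: "\<forall>a\<in>X. finite (N a)" using fY unfolding N_def by auto
        obtain f where f: "inj_on f X" "\<forall>a\<in>X. f a \<in> N a" using hall_aux[OF refl fX fN h] by blast
        have sub: "f ` X \<subseteq> Y" using f(2) unfolding N_def by auto
        have "card (f ` X) = card Y" using card_image[OF f(1)] cX cY by simp
        then have "f ` X = Y" using card_subset_eq[OF fY sub] by simp
        then have "bij_betw f X Y" using f(1) unfolding bij_betw_def by blast
        then show False using nm f(2) unfolding N_def X_def Y_def by auto
      qed
      then obtain S where S: "S \<subseteq> X" "card (\<Union>(N ` S)) < card S" by (auto simp: not_le)
      define G where "G = \<Union>(N ` S)"
      have GY: "G \<subseteq> Y" unfolding G_def N_def by auto
      have fS: "finite S" using S(1) fX finite_subset by blast
      have fG: "finite G" using GY fY finite_subset by blast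
      have cG: "card G + 1 \<le> card S" using S(2) unfolding G_def by simp
      have cS: "card S \<le> d" using card_mono[OF fX S(1)] cX by simp
      have cXS: "real (card (X - S)) = real d - real (card S)"
        using card_Diff_subset[OF fS S(1)] cX cS by simp
      have bound: "c \<ge> 1 + 1 / real d" if cC: "c \<in> C" for c
      proof -
        obtain p where p: "coupling X mu Y nu p" "c = (\<Sum>u\<in>X. \<Sum>v\<in>Y. p u v * g u v)"
          using cC unfolding C_def by blast
        have pnn: "\<And>u v. p u v \<ge> 0" using p(1) unfolding coupling_def by blast
        have rows: "\<And>u. u \<in> X \<Longrightarrow> (\<Sum>v\<in>Y. p u v) = 1 / real d" using p(1) mu unfolding coupling_def by auto
        have cols: "\<And>v. v \<in> Y \<Longrightarrow> (\<Sum>u\<in>X. p u v) = 1 / real d" using p(1) nu unfolding coupling_def by auto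
        define e where "e = (\<lambda>u v. if E u v then 1 else (0::real))"
        have low: "(\<Sum>u\<in>X. \<Sum>v\<in>Y. p u v * (2 - e u v)) \<le> c" unfolding p(2)
        proof (intro sum_mono mult_left_mono pnn)
          fix u v assume "u \<in> X" "v \<in> Y"
          then show "2 - e u v \<le> g u v" using g1 g2 unfolding e_def by (cases "E u v") auto
        qed
        have "(\<Sum>u\<in>X. \<Sum>v\<in>Y. p u v * (2 - e u v)) = (\<Sum>u\<in>X. \<Sum>v\<in>Y. 2 * p u v - p u v * e u v)"
          by (simp add: algebra_simps)
        also have "\<dots> = 2 * (\<Sum>u\<in>X. \<Sum>v\<in>Y. p u v) - (\<Sum>u\<in>X. \<Sum>v\<in>Y. p u v * e u v)"
          by (simp add: sum_subtractf sum_distrib_left)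
        finally have eq: "(\<Sum>u\<in>X. \<Sum>v\<in>Y. p u v * (2 - e u v)) = 2 - (\<Sum>u\<in>X. \<Sum>v\<in>Y. p u v * e u v)"
          using tot[OF p(1)] by simp
        have spl: "(\<Sum>u\<in>X. \<Sum>v\<in>Y. p u v * e u v) = (\<Sum>u\<in>X - S. \<Sum>v\<in>Y. p u v * e u v) + (\<Sum>u\<in>S. \<Sum>v\<in>Y. p u v * e u v)"
          by (rule sum.subset_diff[OF S(1) fX])
        have A1: "(\<Sum>u\<in>X - S. \<Sum>v\<in>Y. p u v * e u v) \<le> real (card (X - S)) / real d"
        proof -
          have "(\<Sum>u\<in>X - S. \<Sum>v\<in>Y. p u v * e u v) \<le> (\<Sum>u\<in>X - S. \<Sum>v\<in>Y. p u v)"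
            by (intro sum_mono) (auto simp: e_def pnn)
          also have "\<dots> = (\<Sum>u\<in>X - S. 1 / real d)" using rows by (intro sum.cong) auto
          finally show ?thesis by simp
        qed
        have A2: "(\<Sum>u\<in>S. \<Sum>v\<in>Y. p u v * e u v) \<le> (\<Sum>u\<in>S. \<Sum>v\<in>G. p u v)"
        proof (rule sum_mono)
          fix u assume uS: "u \<in> S"
          have "(\<Sum>v\<in>Y. p u v * e u v) = (\<Sum>v\<in>G. p u v * e u v)"
          proof (rule sum.mono_neutral_right[OF fY GY], intro ballI)
            fix v assume "v \<in> Y - G"
            then have "\<not> E u v" using uS unfolding G_def N_def by auto
            then show "p u v * e u v = 0" unfolding e_def by simp
          qed
          also have "\<dots> \<le> (\<Sum>v\<in>G. p u v)" by (intro sum_mono) (auto simp: e_def pnn)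
          finally show "(\<Sum>v\<in>Y. p u v * e u v) \<le> (\<Sum>v\<in>G. p u v)" .
        qed
        have A3: "(\<Sum>u\<in>S. \<Sum>v\<in>G. p u v) \<le> real (card G) / real d"
        proof -
          have "(\<Sum>u\<in>S. \<Sum>v\<in>G. p u v) \<le> (\<Sum>u\<in>X. \<Sum>v\<in>G. p u v)"
            by (rule sum_mono2[OF fX S(1)]) (auto intro: sum_nonneg pnn)
          also have "\<dots> = (\<Sum>v\<in>G. \<Sum>u\<in>X. p u v)" by (rule sum.swap)
          also have "\<dots> = (\<Sum>v\<in>G. 1 / real d)" using cols GY by (intro sum.cong) auto
          finally show ?thesis by simp
        qed
        have "(\<Sum>u\<in>X. \<Sum>v\<in>Y. p u v * e u v) \<le> (real d - real (card S) + real (card G)) / real d"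
          using spl A1 A2 A3 cXS by (simp add: add_divide_distrib diff_divide_distrib)
        also have "\<dots> \<le> (real d - 1) / real d"
          using cG dpos by (intro divide_right_mono) auto
        also have "\<dots> = 1 - 1 / real d" using dpos by (simp add: diff_divide_distrib)
        finally show ?thesis using low eq by linarith
      qed
      have "Inf C \<ge> 1 + 1 / real d" using Cne bound by (rule cInf_greatest)
      moreover have "1 / real d > 0" using dpos by simp
      ultimately show False using k0 kappa by linarith
    qed
  next
    assume "\<exists>\<sigma>. bij_betw \<sigma> (nbhd E x) (nbhd E y) \<and> (\<forall>a\<in>nbhd E x. E a (\<sigma> a))"
    then obtain s where s0: "bij_betw s (nbhd E x) (nbhd E y)" "\<forall>a\<in>nbhd E x. E a (s a)" by blast
    have s1: "bij_betw s X Y" unfolding X_def Y_def by (rule s0(1))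
    have s2: "\<forall>a\<in>X. E a (s a)" unfolding X_def by (rule s0(2))
    note s = s1 s2
    have sY: "\<And>u. u \<in> X \<Longrightarrow> s u \<in> Y" by (rule bij_betw_apply[OF s1])
    define p1 where "p1 = (\<lambda>u v. if u \<in> X \<and> v = s u then 1 / real d else 0)"
    have cp: "coupling X mu Y nu p1"
      unfolding coupling_def
    proof (intro conjI allI ballI impI)
      fix u v show "0 \<le> p1 u v" unfolding p1_def by simp
    next
      fix u v assume "u \<notin> X \<or> v \<notin> Y" then show "p1 u v = 0" unfolding p1_def using sY by auto
    next
      fix u assume u: "u \<in> X"
      have "(\<Sum>v\<in>Y. p1 u v) = (\<Sum>v\<in>Y. if v = s u then 1 / real d else 0)" unfolding p1_def using u by simp
      also have "\<dots> = 1 / real d" using sY[OF u] fY by simp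
      finally show "(\<Sum>v\<in>Y. p1 u v) = mu u" using mu u by simp
    next
      fix v assume v: "v \<in> Y"
      define h where "h = (\<lambda>w. if v = w then 1 / real d else (0::real))"
      have "(\<Sum>u\<in>X. p1 u v) = (\<Sum>u\<in>X. h (s u))" unfolding p1_def h_def by (intro sum.cong) auto
      also have "\<dots> = (\<Sum>w\<in>Y. h w)" using sum.reindex_bij_betw[OF s(1), of h] by simp
      also have "\<dots> = 1 / real d" unfolding h_def using v fY by simp
      finally show "(\<Sum>u\<in>X. p1 u v) = nu v" using nu v by simp
    qed
    have "(\<Sum>u\<in>X. \<Sum>v\<in>Y. p1 u v * g u v) = (\<Sum>u\<in>X. 1 / real d)"
    proof (rule sum.cong[OF refl])
      fix u assume u: "u \<in> X"
      have "(\<Sum>v\<in>Y. p1 u v * g u v) = (\<Sum>v\<in>Y. if v = s u then 1 / real d * g u (s u) else 0)"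
        unfolding p1_def using u by (intro sum.cong) auto
      also have "\<dots> = 1 / real d * g u (s u)" using sY[OF u] fY by simp
      also have "\<dots> = 1 / real d" using ge[OF u sY[OF u] s(2)[rule_format, OF u]] by simp
      finally show "(\<Sum>v\<in>Y. p1 u v * g u v) = 1 / real d" .
    qed
    also have "\<dots> = 1" using cX dpos by simp
    finally have c1: "(\<Sum>u\<in>X. \<Sum>v\<in>Y. p1 u v * g u v) = 1" .
    have "1 \<in> C" unfolding C_def mem_Collect_eq
      by (rule exI[of _ p1]) (use c1 cp in simp)
    then have "Inf C \<le> 1" using bdd by (rule cInf_lower)
    then show "ollivier_curv E x y = 0" using Wge kappa by simp
  qed
qed


end
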